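(* Let $\rho \in (0,+\infty)$ and let $\overline{B}_\rho := \{u \in C([0,1]) : \|u\|_\infty \le \rho\}$, $\partial B_\rho := \{u \in C([0,1]) : \|u\|_\infty = \rho\}$, where $\|u\|_\infty = \sup_{t\in[0,1]}|u(t)|$. Assume that: (1) $k : [0,1]^2 \to [0,+\infty)$ is continuous; (2) $H : \overline{B}_\rho \to \mathbb{R}$ is continuous and there exist $\underline{H_\rho}, \overline{H_\rho} \in \mathbb{R}$ such that $\underline{H_\rho} \le H[u] \le \overline{H_\rho}$ for every $u \in \overline{B}_\rho$; (3) $f : \Pi_\rho \to \mathbb{R}$ is continuous, where $\Pi_\rho := [0,1]\times[-\rho,\rho]\times[\underline{H_\rho},\overline{H_\rho}] \subset \mathbb{R}^3$; (4) there exist continuous functions $\underline{f_\rho}, \overline{f_\rho} : [0,1] \to \mathbb{R}$ such that $\underline{f_\rho}(t) \le f(t,u,v) \le \overline{f_\rho}(t)$ for every $(t,u,v) \in \Pi_\rho$; (5) setting $\underline{F_\rho}(t) := \int_0^1 k(t,s)\underline{f_\rho}(s)\,ds$ and $\overline{F_\rho}(t) := \int_0^1 k(t,s)\overline{f_\rho}(s)\,ds$, at least one of the following holds: (5a) there exists $t_\rho \in [0,1]$ with $\overline{F_\rho}(t_\rho) < 0$; (5b) there exists $t_\rho \in [0,1]$ with $\underline{F_\rho}(t_\rho) > 0$. Then there exist $\lambda_\rho^+ > 0$, $\lambda_\rho^- < 0$ and $u^+, u^- \in \partial B_\rho$ such that $(\lambda,u) = (\lambda_\rho^+,u^+)$ and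 $(\lambda,u) = (\lambda_\rho^-,u^-)$ both satisfy $$u(t) = \lambda \int_0^1 k(t,s)\, f(s,u(s),H[u])\,ds \quad \text{for all } t \in [0,1].$$ Furthermore, if $\lambda_\rho \in \mathbb{R}$ and $u_\rho \in \overline{B}_\rho$ satisfy $u_\rho(t) = \lambda_\rho \int_0^1 k(t,s)\, f(s,u_\rho(s),H[u_\rho])\,ds$ for all $t\in[0,1]$, then: (6a) if (5a) holds, $|\lambda_\rho| \le -\dfrac{\rho}{\overline{F_\rho}(t_\rho)}$; (6b) if (5b) holds, $|\lambda_\rho| \le \dfrac{\rho}{\underline{F_\rho}(t_\rho)}$.
   Context: $C([0,1])$ denotes the Banach space of real-valued continuous functions on $[0,1]$ with the supremum norm $\|\cdot\|_\infty$. *)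

theory Defs
  imports "HOL-Analysis.Analysis"
begin

text \<open>Elements of C([0,1]) are represented as functions real => real that are
continuous on [0,1]; only their values on [0,1] matter.\<close>

definition C01 :: "(real \<Rightarrow> real) set" where
  "C01 = {u. continuous_on {0..1} u}"

definition supnorm :: "(real \<Rightarrow> real) \<Rightarrow> real" where
  "supnorm u = (SUP t\<in>{0..1}. \<bar>u t\<bar>)"

definition closed_ball_C01 :: "real \<Rightarrow> (real \<Rightarrow> real) set" where
  "closed_ball_C01 \<rho> = {u \<in> C01. supnorm u \<le> \<rho>}"

definition sphere_C01 :: "real \<Rightarrow> (real \<Rightarrow> real) set" where
  "sphere_C01 \<rho> = {u \<in> C01. supnorm u = \<rho>}"

definition functional_continuous_on ::
  "(real \<Rightarrow> real) set \<Rightarrow> ((real \<Rightarrow> real) \<Rightarrow> real) \<Rightarrow> bool" where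
  "functional_continuous_on S H \<longleftrightarrow>
     (\<forall>u\<in>S. \<forall>e>0. \<exists>d>0. \<forall>v\<in>S. supnorm (\<lambda>t. v t - u t) < d \<longrightarrow> \<bar>H v - H u\<bar> < e)"

end

theory Submission
  imports Defs "HOL-Homology.Homology" "HOL-Complex_Analysis.Great_Picard"
begin

definition dball :: "nat \<Rightarrow> (nat \<Rightarrow> real) set" where
  "dball m = {x. (\<Sum>i\<le>m. x i ^ 2) \<le> 1 \<and> (\<forall>i>m. x i = 0)}"

lemma contractible_dball: "contractible_space (subtopology (powertop_real UNIV) (dball m))"
proof -
  let ?X = "subtopology (powertop_real UNIV) (dball m)"
  define h where "h = (\<lambda>(t::real, x::nat\<Rightarrow>real). (\<lambda>i. (1 - t) * x i))"
  have "homotopic_with (\<lambda>x. True) ?X ?X id (\<lambda>x. (\<lambda>i. 0))"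
    unfolding homotopic_with_def
  proof (intro exI conjI)
    show "continuous_map (prod_topology (top_of_set {0..1}) ?X) ?X h"
    proof (rule continuous_map_into_subtopology)
      show "continuous_map (prod_topology (top_of_set {0..1}) ?X) (powertop_real UNIV) h"
        unfolding continuous_map_componentwise_UNIV h_def
      proof
        fix i
        have 1: "continuous_map (prod_topology (top_of_set {0..1}) ?X) euclideanreal (\<lambda>p. 1 - fst p)"
          by (intro continuous_intros continuous_map_into_fulltopology[OF continuous_map_fst])
        have 2: "continuous_map (prod_topology (top_of_set {0..1}) ?X) euclideanreal (\<lambda>p. snd p i)"
          by (rule continuous_map_compose[OF continuous_map_snd, unfolded o_def])
             (rule continuous_map_from_subtopology[OF continuous_map_product_projection], simp)
        show "continuous_map (prod_topology (top_of_set {0..1}) ?X) euclideanreal (\<lambda>x. (case x of (t, x) \<Rightarrow> \<lambda>i. (1 - t) * x i) i)"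
          using continuous_map_real_mult[OF 1 2] by (simp add: case_prod_beta)
      qed
      show "h \<in> topspace (prod_topology (top_of_set {0..1}) ?X) \<rightarrow> dball m"
      proof (rule funcsetI)
        fix p assume "p \<in> topspace (prod_topology (top_of_set {0..1::real}) ?X)"
        then obtain t :: real and x where p: "p = (t, x)" and t: "0 \<le> t" "t \<le> 1" and x: "x \<in> dball m"
          by (cases p) auto
        have "(\<Sum>i\<le>m. ((1-t) * x i)^2) = (1-t)^2 * (\<Sum>i\<le>m. x i ^ 2)"
          by (simp add: power_mult_distrib sum_distrib_left)
        also have "\<dots> \<le> 1 * 1"
          using x t unfolding dball_def
          by (intro mult_mono) (auto simp: power_le_one sum_nonneg)
        finally show "h p \<in> dball m" using x unfolding dball_def h_def p by auto
      qed
    qed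
  qed (auto simp: h_def)
  then show ?thesis unfolding contractible_space_def by blast
qed

lemma brouwer_dball:
  fixes F :: "(nat \<Rightarrow> real) \<Rightarrow> (nat \<Rightarrow> real)"
  assumes cont: "continuous_map (subtopology (powertop_real UNIV) (dball m)) (powertop_real UNIV) F"
    and into: "\<And>x. x \<in> dball m \<Longrightarrow> F x \<in> dball m"
  shows "\<exists>x\<in>dball m. F x = x"
proof (rule ccontr)
  assume nofix: "\<not> (\<exists>x\<in>dball m. F x = x)"
  let ?X = "subtopology (powertop_real UNIV) (dball m)"
  define a where "a = (\<lambda>x. \<Sum>i\<le>m. (x i - F x i)^2)"
  define b where "b = (\<lambda>x. \<Sum>i\<le>m. x i * (x i - F x i))"
  define c where "c = (\<lambda>x::nat\<Rightarrow>real. (\<Sum>i\<le>m. (x i)^2) - 1)"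
  define t where "t = (\<lambda>x. (- b x + sqrt ((b x)^2 - a x * c x)) / a x)"
  define r where "r = (\<lambda>x i. x i + t x * (x i - F x i))"
  have apos: "a x > 0" if x: "x \<in> dball m" for x
  proof -
    have Fx: "F x \<in> dball m" using into x .
    have "F x \<noteq> x" using nofix x by blast
    then obtain j where j: "F x j \<noteq> x j" by auto
    have "j \<le> m"
    proof (rule ccontr)
      assume "\<not> j \<le> m"
      then have "j > m" by simp
      then show False using x Fx j unfolding dball_def by auto
    qed
    have "0 < (x j - F x j)^2" using j by simp
    also have "\<dots> \<le> a x" unfolding a_def
      by (rule member_le_sum[where f="\<lambda>i. (x i - F x i)^2"]) (use \<open>j \<le> m\<close> in auto)
    finally show ?thesis .
  qed
  have cle: "c x \<le> 0" if "x \<in> dball m" for x using that unfolding c_def dball_def by auto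
  have xi: "continuous_map ?X euclideanreal (\<lambda>x. x i)" for i
    by (rule continuous_map_from_subtopology[OF continuous_map_product_projection]) simp
  have Fi: "continuous_map ?X euclideanreal (\<lambda>x. F x i)" for i
    using continuous_map_compose[OF cont continuous_map_product_projection[of i UNIV "\<lambda>_. euclideanreal"]]
    by (simp add: o_def)
  have ca: "continuous_map ?X euclideanreal a" unfolding a_def
    by (intro continuous_intros xi Fi) auto
  have cb: "continuous_map ?X euclideanreal b" unfolding b_def
    by (intro continuous_intros xi Fi) auto
  have cc: "continuous_map ?X euclideanreal c" unfolding c_def
    by (intro continuous_intros xi Fi) auto
  have ct: "continuous_map ?X euclideanreal t" unfolding t_def
    by (intro continuous_intros ca cb cc) (use apos in force)
  have sph: "(\<Sum>i\<le>m. (r x i)^2) = 1" if x: "x \<in> dball m" for x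
  proof -
    define s where "s = sqrt ((b x)^2 - a x * c x)"
    have "a x * c x \<le> 0" using apos[OF x] cle[OF x] by (simp add: mult_nonneg_nonpos)
    then have s2: "s^2 = (b x)^2 - a x * c x" unfolding s_def using zero_le_power2[of "b x"] by (intro real_sqrt_pow2) linarith
    have at: "a x * t x = s - b x" unfolding t_def s_def using apos[OF x] by simp
    have "(\<Sum>i\<le>m. (r x i)^2) = (\<Sum>i\<le>m. (x i)^2 + 2 * t x * (x i * (x i - F x i)) + (t x)^2 * (x i - F x i)^2)"
      unfolding r_def by (rule sum.cong) (auto simp: power2_eq_square algebra_simps)
    also have "\<dots> = (c x + 1) + 2 * t x * b x + (t x)^2 * a x"
      unfolding a_def b_def c_def by (simp add: sum.distrib sum_distrib_left)
    also have "\<dots> = 1"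
    proof -
      have "a x * ((t x)^2 * a x + 2 * t x * b x + c x) = (a x * t x)^2 + 2 * (a x * t x) * b x + a x * c x"
        by (simp add: power2_eq_square algebra_simps)
      also have "\<dots> = 0" unfolding at using s2 by (simp add: power2_eq_square algebra_simps)
      finally have "(t x)^2 * a x + 2 * t x * b x + c x = 0" using apos[OF x] by simp
      then show ?thesis by simp
    qed
    finally show ?thesis .
  qed
  have rfix: "r x = x" if x: "x \<in> dball m" and x1: "(\<Sum>i\<le>m. (x i)^2) = 1" for x
  proof -
    have Fx: "F x \<in> dball m" using into x .
    have "(\<Sum>i\<le>m. x i * F x i) \<le> 1"
    proof -
      have "(\<Sum>i\<le>m. 2 * (x i * F x i)) \<le> (\<Sum>i\<le>m. (x i)^2 + (F x i)^2)"
        by (rule sum_mono) (use sum_squares_bound[of "x _" "F x _"] in \<open>simp add: mult.assoc\<close>)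
      also have "\<dots> \<le> 2" using x1 Fx unfolding dball_def by (simp add: sum.distrib)
      finally show ?thesis by (simp add: sum_distrib_left[symmetric])
    qed
    then have b0: "b x \<ge> 0" unfolding b_def using x1
      by (simp add: right_diff_distrib sum_subtractf power2_eq_square)
    have "c x = 0" using x1 unfolding c_def by simp
    then have "t x = 0" unfolding t_def using b0 by simp
    then show ?thesis unfolding r_def by simp
  qed
  have ret: "retraction_maps ?X (nsphere m) r id"
    unfolding retraction_maps_def
  proof (intro conjI)
    show "continuous_map ?X (nsphere m) r"
      unfolding nsphere
    proof (rule continuous_map_into_subtopology)
      show "continuous_map ?X (powertop_real UNIV) r"
        unfolding continuous_map_componentwise_UNIV r_def
        by (intro allI continuous_intros xi Fi ct)
      show "r \<in> topspace ?X \<rightarrow> {x. (\<Sum>i\<le>m. (x i)^2) = 1 \<and> (\<forall>i>m. x i = 0)}"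
      proof (rule funcsetI)
        fix x assume "x \<in> topspace ?X"
        then have x: "x \<in> dball m" by simp
        have Fx: "F x \<in> dball m" using into x .
        show "r x \<in> {x. (\<Sum>i\<le>m. (x i)^2) = 1 \<and> (\<forall>i>m. x i = 0)}"
          using sph[OF x] x Fx unfolding dball_def r_def by auto
      qed
    qed
    show "continuous_map (nsphere m) ?X id"
      unfolding nsphere
      by (rule continuous_map_into_subtopology[OF continuous_map_from_subtopology[OF continuous_map_id]])
         (auto simp: dball_def)
    show "\<forall>x\<in>topspace (nsphere m). r (id x) = x"
      unfolding nsphere using rfix by (auto simp: dball_def)
  qed
  then have "contractible_space (nsphere m)"
    using contractible_space_retraction_map_image[OF _ contractible_dball] retraction_map_def by blast
  then show False using non_contractible_space_nsphere by blast
qed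

lemma openin_coord_box:
  "openin (powertop_real UNIV) {y. \<forall>i<(n::nat). \<bar>y i - (x::nat\<Rightarrow>real) i\<bar> < d}"
proof (induction n)
  case 0
  show ?case using openin_topspace[of "powertop_real UNIV"] by simp
next
  case (Suc n)
  have eq: "{y. \<forall>i<Suc n. \<bar>y i - x i\<bar> < d} = {y. \<forall>i<n. \<bar>y i - x i\<bar> < d} \<inter> {y \<in> topspace (powertop_real UNIV). y n \<in> ball (x n) d}"
    by (auto simp: less_Suc_eq dist_real_def abs_minus_commute)
  show ?case unfolding eq
    by (intro openin_Int Suc openin_continuous_map_preimage[OF continuous_map_product_projection]) auto
qed

lemma epsdelta_cont:
  fixes g :: "(nat \<Rightarrow> real) \<Rightarrow> real"
  assumes "\<And>x e. x \<in> S \<Longrightarrow> e > 0 \<Longrightarrow> \<exists>d>0. \<forall>y\<in>S. (\<forall>i<n. \<bar>y i - x i\<bar> < d) \<longrightarrow> \<bar>g y - g x\<bar> < e"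
  shows "continuous_map (subtopology (powertop_real UNIV) S) euclideanreal g"
  unfolding continuous_map_def
proof (intro conjI allI impI)
  show "g \<in> topspace (subtopology (powertop_real UNIV) S) \<rightarrow> topspace euclideanreal" by simp
  fix U :: "real set" assume "openin euclideanreal U"
  then have U: "open U" by simp
  show "openin (subtopology (powertop_real UNIV) S) {x \<in> topspace (subtopology (powertop_real UNIV) S). g x \<in> U}"
  proof (subst openin_subopen, intro ballI)
    fix x assume "x \<in> {x \<in> topspace (subtopology (powertop_real UNIV) S). g x \<in> U}"
    then have xS: "x \<in> S" and gx: "g x \<in> U" by auto
    obtain e where e: "e > 0" "ball (g x) e \<subseteq> U" using U gx open_contains_ball by blast
    obtain d where d: "d > 0" "\<forall>y\<in>S. (\<forall>i<n. \<bar>y i - x i\<bar> < d) \<longrightarrow> \<bar>g y - g x\<bar> < e"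
      using assms[OF xS e(1)] by blast
    let ?T = "{y. \<forall>i<n. \<bar>y i - x i\<bar> < d} \<inter> S"
    show "\<exists>T. openin (subtopology (powertop_real UNIV) S) T \<and> x \<in> T \<and> T \<subseteq> {x \<in> topspace (subtopology (powertop_real UNIV) S). g x \<in> U}"
    proof (intro exI conjI)
      show "openin (subtopology (powertop_real UNIV) S) ?T"
        unfolding openin_subtopology
        by (rule exI[of _ "{y. \<forall>i<n. \<bar>y i - x i\<bar> < d}"]) (simp add: openin_coord_box)
      show "x \<in> ?T" using xS d(1) by simp
      show "?T \<subseteq> {x \<in> topspace (subtopology (powertop_real UNIV) S). g x \<in> U}"
      proof
        fix y assume y: "y \<in> ?T"
        then have "\<bar>g y - g x\<bar> < e" using d(2) by blast
        then have "g y \<in> ball (g x) e" by (simp add: dist_real_def abs_minus_commute)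
        then show "y \<in> {x \<in> topspace (subtopology (powertop_real UNIV) S). g x \<in> U}"
          using e(2) y by auto
      qed
    qed
  qed
qed

definition cube :: "nat \<Rightarrow> real \<Rightarrow> (nat \<Rightarrow> real) set" where
  "cube n R = {x. (\<forall>i<n. \<bar>x i\<bar> \<le> R) \<and> (\<forall>i\<ge>n. x i = 0)}"

lemma brouwer_cube:
  fixes F :: "(nat \<Rightarrow> real) \<Rightarrow> (nat \<Rightarrow> real)"
  assumes R: "R > 0"
    and into: "\<And>x. x \<in> cube n R \<Longrightarrow> F x \<in> cube n R"
    and cont: "\<And>x e. x \<in> cube n R \<Longrightarrow> e > 0 \<Longrightarrow>
        \<exists>d>0. \<forall>y\<in>cube n R. (\<forall>i<n. \<bar>y i - x i\<bar> < d) \<longrightarrow> (\<forall>i<n. \<bar>F y i - F x i\<bar> < e)"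
  shows "\<exists>x\<in>cube n R. F x = x"
proof (cases n)
  case 0
  have "(\<lambda>i. 0) \<in> cube n R" using R by (simp add: cube_def)
  moreover have "\<And>x. x \<in> cube n R \<Longrightarrow> x = (\<lambda>i. 0)" using 0 by (auto simp: cube_def)
  ultimately show ?thesis using into by blast
next
  case (Suc m)
  define L where "L = R * sqrt n"
  have L: "L > 0" using R Suc by (simp add: L_def)
  define cl where "cl = (\<lambda>x::nat\<Rightarrow>real. \<lambda>i. if i < n then max (- R) (min R (x i)) else 0)"
  define G where "G = (\<lambda>y::nat\<Rightarrow>real. \<lambda>i. F (cl (\<lambda>j. L * y j)) i / L)"
  have clQ: "cl x \<in> cube n R" for x using R by (auto simp: cl_def cube_def)
  have clid: "cl x = x" if "x \<in> cube n R" for x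
    using that by (intro ext) (auto simp: cl_def cube_def abs_le_iff not_less)
  have cllip: "\<bar>cl x i - cl y i\<bar> \<le> \<bar>x i - y i\<bar>" for x y i
    by (auto simp: cl_def)
  have Gin: "G y \<in> dball m" for y
  proof -
    have FQ: "F (cl (\<lambda>j. L * y j)) \<in> cube n R" using into clQ by blast
    have "(\<Sum>i\<le>m. (G y i)^2) \<le> (\<Sum>i\<le>m. (R / L)^2)"
    proof (rule sum_mono)
      fix i assume "i \<in> {..m}"
      then have "i < n" using Suc by simp
      then have Fi: "\<bar>F (cl (\<lambda>j. L * y j)) i\<bar> \<le> R" using FQ by (simp add: cube_def)
      have "\<bar>G y i\<bar> = \<bar>F (cl (\<lambda>j. L * y j)) i\<bar> / L" unfolding G_def using L by (simp add: abs_divide)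
      also have "\<dots> \<le> R / L" using Fi L by (rule divide_right_mono[OF _ less_imp_le])
      finally have "\<bar>G y i\<bar> \<le> R / L" .
      then have "\<bar>G y i\<bar>^2 \<le> (R / L)^2" by (rule power_mono) simp
      then show "(G y i)^2 \<le> (R / L)^2" by simp
    qed
    also have "\<dots> = real n * (R / L)^2" using Suc by simp
    also have "\<dots> = 1"
    proof -
      have s2: "(sqrt (real n))^2 = real n" by simp
      have "L^2 = R^2 * real n" unfolding L_def by (simp only: power_mult_distrib s2)
      then show ?thesis using R Suc by (simp add: power_divide)
    qed
    finally have 1: "(\<Sum>i\<le>m. (G y i)^2) \<le> 1" .
    have 2: "G y i = 0" if "i > m" for i
    proof -
      have "i \<ge> n" using that Suc by simp
      then have "F (cl (\<lambda>j. L * y j)) i = 0" using FQ by (simp add: cube_def)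
      then show ?thesis unfolding G_def by simp
    qed
    show ?thesis unfolding dball_def using 1 2 by blast
  qed
  have Gcont: "continuous_map (subtopology (powertop_real UNIV) (dball m)) (powertop_real UNIV) G"
    unfolding continuous_map_componentwise_UNIV
  proof
    fix i
    show "continuous_map (subtopology (powertop_real UNIV) (dball m)) euclideanreal (\<lambda>y. G y i)"
    proof (rule epsdelta_cont[where n=n])
      fix y and e :: real assume "y \<in> dball m" "e > 0"
      have eL: "e * L > 0" using \<open>e > 0\<close> L by simp
      obtain d where d: "d > 0" "\<forall>z\<in>cube n R. (\<forall>i<n. \<bar>z i - cl (\<lambda>j. L * y j) i\<bar> < d) \<longrightarrow>
          (\<forall>i<n. \<bar>F z i - F (cl (\<lambda>j. L * y j)) i\<bar> < e * L)"
        using cont[OF clQ[of "\<lambda>j. L * y j"] eL] by blast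
      show "\<exists>d>0. \<forall>z\<in>dball m. (\<forall>i<n. \<bar>z i - y i\<bar> < d) \<longrightarrow> \<bar>G z i - G y i\<bar> < e"
      proof (intro exI conjI ballI impI)
        show "d / L > 0" using d L by simp
        fix z assume "z \<in> dball m" and close: "\<forall>i<n. \<bar>z i - y i\<bar> < d / L"
        have "\<forall>i<n. \<bar>cl (\<lambda>j. L * z j) i - cl (\<lambda>j. L * y j) i\<bar> < d"
        proof (intro allI impI)
          fix i assume "i < n"
          have "\<bar>cl (\<lambda>j. L * z j) i - cl (\<lambda>j. L * y j) i\<bar> \<le> \<bar>L * z i - L * y i\<bar>"
            using cllip[of "\<lambda>j. L * z j" i "\<lambda>j. L * y j"] by simp
          also have "\<dots> = L * \<bar>z i - y i\<bar>" using L by (simp add: abs_mult right_diff_distrib[symmetric])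
          also have "\<dots> < L * (d / L)" using close \<open>i < n\<close> L by (intro mult_strict_left_mono) auto
          also have "\<dots> = d" using L by simp
          finally show "\<bar>cl (\<lambda>j. L * z j) i - cl (\<lambda>j. L * y j) i\<bar> < d" .
        qed
        then have Fc: "\<forall>i<n. \<bar>F (cl (\<lambda>j. L * z j)) i - F (cl (\<lambda>j. L * y j)) i\<bar> < e * L"
          by (rule d(2)[THEN bspec, OF clQ, THEN mp])
        have "\<bar>F (cl (\<lambda>j. L * z j)) i - F (cl (\<lambda>j. L * y j)) i\<bar> < e * L"
        proof (cases "i < n")
          case True then show ?thesis using Fc by blast
        next
          case False
          have "F (cl (\<lambda>j. L * z j)) i = 0" "F (cl (\<lambda>j. L * y j)) i = 0"
            using into[OF clQ[of "\<lambda>j. L * z j"]] into[OF clQ[of "\<lambda>j. L * y j"]] False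
            by (simp_all add: cube_def)
          then show ?thesis using eL by simp
        qed
        then have "\<bar>F (cl (\<lambda>j. L * z j)) i - F (cl (\<lambda>j. L * y j)) i\<bar> / L < e"
          using L by (simp add: divide_less_eq)
        moreover have "\<bar>G z i - G y i\<bar> = \<bar>F (cl (\<lambda>j. L * z j)) i - F (cl (\<lambda>j. L * y j)) i\<bar> / L"
          unfolding G_def using L by (simp add: abs_divide diff_divide_distrib[symmetric])
        ultimately show "\<bar>G z i - G y i\<bar> < e" by simp
      qed
    qed
  qed
  obtain y where y: "y \<in> dball m" "G y = y"
    using brouwer_dball[OF Gcont Gin] by blast
  define x where "x = cl (\<lambda>j. L * y j)"
  have Fx: "F x \<in> cube n R" using into clQ x_def by blast
  have eq: "(\<lambda>j. L * y j) = F x"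
  proof
    fix j
    have "G y j = y j" using y by simp
    then show "L * y j = F x j" unfolding G_def x_def using L by (simp add: field_simps)
  qed
  have "x = cl (F x)" by (subst eq[symmetric]) (rule x_def)
  also have "\<dots> = F x" by (rule clid[OF Fx])
  finally have "x = F x" .
  then have "x \<in> cube n R" using Fx by simp
  then show ?thesis using \<open>x = F x\<close> by (intro bexI[of _ x]) simp_all
qed

lemma supnorm_ge:
  assumes "continuous_on {0..1} u" "t \<in> {0..1}"
  shows "\<bar>u t\<bar> \<le> supnorm u"
proof -
  have "compact ((\<lambda>t. \<bar>u t\<bar>) ` {0..1})"
    by (intro compact_continuous_image continuous_intros assms(1)) simp
  then have "bdd_above ((\<lambda>t. \<bar>u t\<bar>) ` {0..1})" by (simp add: bounded_imp_bdd_above compact_imp_bounded)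
  then show ?thesis unfolding supnorm_def using assms(2) by (rule cSUP_upper2) simp
qed

lemma supnorm_le:
  assumes "\<And>t. t \<in> {0..1} \<Longrightarrow> \<bar>u t\<bar> \<le> B"
  shows "supnorm u \<le> B"
  unfolding supnorm_def by (rule cSUP_least) (use assms in auto)

lemma in_ball_C01:
  assumes "continuous_on {0..1} u" "\<And>t. t \<in> {0..1} \<Longrightarrow> \<bar>u t\<bar> \<le> \<rho>"
  shows "u \<in> closed_ball_C01 \<rho>"
  using assms supnorm_le unfolding closed_ball_C01_def C01_def by blast

lemma ball_C01_D:
  assumes "u \<in> closed_ball_C01 \<rho>" "t \<in> {0..1}"
  shows "\<bar>u t\<bar> \<le> \<rho>" "continuous_on {0..1} u"
  using assms supnorm_ge[of u t] unfolding closed_ball_C01_def C01_def by auto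

lemma k_cont_t:
  fixes k :: "real \<Rightarrow> real \<Rightarrow> real"
  assumes "continuous_on ({0..1} \<times> {0..1}) (\<lambda>(t, s). k t s)" "t \<in> {0..1}"
  shows "continuous_on {0..1} (k t)"
proof -
  have "continuous_on {0..1} ((\<lambda>(t, s). k t s) \<circ> (\<lambda>s. (t, s)))"
    by (rule continuous_on_compose[OF _ continuous_on_subset[OF assms(1)]])
       (use assms(2) in \<open>auto intro!: continuous_intros\<close>)
  then show ?thesis by (simp add: o_def)
qed

lemma k_bound:
  fixes k :: "real \<Rightarrow> real \<Rightarrow> real"
  assumes "continuous_on ({0..1} \<times> {0..1}) (\<lambda>(t, s). k t s)"
  obtains K where "K > 0" "\<And>t s. t \<in> {0..1} \<Longrightarrow> s \<in> {0..1} \<Longrightarrow> \<bar>k t s\<bar> \<le> K"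
proof -
  obtain B where B: "B \<ge> 0" "\<And>p. p \<in> {0..1} \<times> {0..1} \<Longrightarrow> norm ((\<lambda>(t, s). k t s) p) \<le> B"
    using continuous_on_compact_bound[OF compact_Times[OF compact_Icc compact_Icc] assms] by blast
  show ?thesis
  proof (rule that[of "B + 1"])
    show "B + 1 > 0" using B by simp
    fix t s :: real assume "t \<in> {0..1}" "s \<in> {0..1}"
    then show "\<bar>k t s\<bar> \<le> B + 1" using B(2)[of "(t, s)"] by simp
  qed
qed

lemma k_unif:
  fixes k :: "real \<Rightarrow> real \<Rightarrow> real"
  assumes "continuous_on ({0..1} \<times> {0..1}) (\<lambda>(t, s). k t s)" "e > 0"
  shows "\<exists>d>0. \<forall>t\<in>{0..1}. \<forall>t'\<in>{0..1}. \<forall>s\<in>{0..1}. \<bar>t - t'\<bar> < d \<longrightarrow> \<bar>k t s - k t' s\<bar> < e"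
proof -
  have "uniformly_continuous_on ({0..1} \<times> {0..1}) (\<lambda>(t, s). k t s)"
    by (rule compact_uniformly_continuous[OF assms(1)]) (intro compact_Times compact_Icc)
  then obtain d where d: "d > 0" "\<forall>x\<in>{0..1} \<times> {0..1}. \<forall>x'\<in>{0..1} \<times> {0..1}. dist x' x < d \<longrightarrow>
      dist ((\<lambda>(t, s). k t s) x') ((\<lambda>(t, s). k t s) x) < e"
    unfolding uniformly_continuous_on_def using assms(2) by blast
  show ?thesis
  proof (intro exI conjI ballI impI)
    show "d > 0" by fact
    fix t t' s :: real assume "t \<in> {0..1}" "t' \<in> {0..1}" "s \<in> {0..1}" "\<bar>t - t'\<bar> < d"
    then show "\<bar>k t s - k t' s\<bar> < e"
      using d(2)[rule_format, of "(t', s)" "(t, s)"] by (simp add: dist_Pair_Pair dist_real_def)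
  qed
qed

lemma ratio_bound:
  fixes a b a' b' \<epsilon> \<eta> :: real
  assumes "b > 0" "b' \<ge> \<eta>" "\<eta> > 0" "\<bar>a\<bar> \<le> b" "\<bar>a' - a\<bar> \<le> \<epsilon>" "\<bar>b' - b\<bar> \<le> \<epsilon>"
  shows "\<bar>a' / b' - a / b\<bar> \<le> 2 * \<epsilon> / \<eta>"
proof -
  have b': "b' > 0" using assms by simp
  have "a' / b' - a / b = ((a' - a) * b + a * (b - b')) / (b * b')"
    using assms b' by (simp add: field_simps)
  also have "\<bar>\<dots>\<bar> = \<bar>(a' - a) * b + a * (b - b')\<bar> / (b * b')"
    using assms b' by (simp add: abs_divide)
  also have "\<dots> \<le> (\<epsilon> * b + b * \<epsilon>) / (b * b')"
  proof (rule divide_right_mono)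
    have "\<bar>(a' - a) * b\<bar> \<le> \<epsilon> * b" using assms by (simp add: abs_mult mult_right_mono)
    moreover have "\<bar>a * (b - b')\<bar> \<le> b * \<epsilon>"
      using assms by (simp add: abs_mult abs_minus_commute mult_mono)
    ultimately show "\<bar>(a' - a) * b + a * (b - b')\<bar> \<le> \<epsilon> * b + b * \<epsilon>" by (smt (verit) abs_triangle_ineq)
  qed (use assms b' in simp)
  also have "\<dots> = 2 * \<epsilon> / b'" using assms b' by (simp add: field_simps)
  also have "\<dots> \<le> 2 * \<epsilon> / \<eta>"
  proof -
    have "\<epsilon> \<ge> 0" using assms(6) by simp
    then show ?thesis using assms b' by (intro divide_left_mono) auto
  qed
  finally show ?thesis .
qed

lemma max_lip:
  fixes p q :: "nat \<Rightarrow> real"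
  assumes "A \<noteq> {}" "finite A" "\<And>i. i \<in> A \<Longrightarrow> \<bar>p i - q i\<bar> \<le> \<epsilon>"
  shows "\<bar>Max ((\<lambda>i. \<bar>p i\<bar>) ` A) - Max ((\<lambda>i. \<bar>q i\<bar>) ` A)\<bar> \<le> \<epsilon>"
proof -
  have 1: "Max ((\<lambda>i. \<bar>p i\<bar>) ` A) \<le> Max ((\<lambda>i. \<bar>q i\<bar>) ` A) + \<epsilon>"
  proof (subst Max_le_iff, simp_all add: assms, intro ballI)
    fix i assume i: "i \<in> A"
    have "\<bar>q i\<bar> \<le> Max ((\<lambda>i. \<bar>q i\<bar>) ` A)" using i assms by (intro Max_ge) auto
    then show "\<bar>p i\<bar> \<le> Max ((\<lambda>i. \<bar>q i\<bar>) ` A) + \<epsilon>" using assms(3)[OF i] by linarith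
  qed
  have 2: "Max ((\<lambda>i. \<bar>q i\<bar>) ` A) \<le> Max ((\<lambda>i. \<bar>p i\<bar>) ` A) + \<epsilon>"
  proof (subst Max_le_iff, simp_all add: assms, intro ballI)
    fix i assume i: "i \<in> A"
    have "\<bar>p i\<bar> \<le> Max ((\<lambda>i. \<bar>p i\<bar>) ` A)" using i assms by (intro Max_ge) auto
    then show "\<bar>q i\<bar> \<le> Max ((\<lambda>i. \<bar>p i\<bar>) ` A) + \<epsilon>" using assms(3)[OF i] by linarith
  qed
  from 1 2 show ?thesis by linarith
qed

definition tau :: "nat \<Rightarrow> nat \<Rightarrow> real" where "tau N i = real i / real N"
definition psi :: "nat \<Rightarrow> nat \<Rightarrow> real \<Rightarrow> real" where "psi N i t = max 0 (1 / real N - \<bar>t - tau N i\<bar>)"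
definition Spsi :: "nat \<Rightarrow> real \<Rightarrow> real" where "Spsi N t = (\<Sum>i<Suc N. psi N i t)"
definition Ux :: "nat \<Rightarrow> (nat \<Rightarrow> real) \<Rightarrow> real \<Rightarrow> real" where
  "Ux N x t = (\<Sum>i<Suc N. x i * psi N i t) / Spsi N t"

lemma tau_in: "N \<ge> 1 \<Longrightarrow> i < Suc N \<Longrightarrow> tau N i \<in> {0..1}"
  by (auto simp: tau_def)

lemma psi_nonneg: "psi N i t \<ge> 0" by (simp add: psi_def)

lemma near_node:
  assumes "N \<ge> 1" "t \<in> {0..1}"
  obtains j where "j < Suc N" "\<bar>t - tau N j\<bar> < 1 / real N"
proof -
  define j where "j = nat \<lfloor>real N * t\<rfloor>"
  have Nt: "0 \<le> real N * t" "real N * t \<le> real N" using assms by (auto simp: mult_le_cancel_left1)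
  have fl0: "0 \<le> \<lfloor>real N * t\<rfloor>" using Nt by simp
  have j1: "real j \<le> real N * t" unfolding j_def using fl0 by simp
  have j2: "real N * t < real j + 1" unfolding j_def using fl0 by linarith
  have "real j \<le> real N" using j1 Nt by simp
  then have jN: "j < Suc N" by simp
  have N0: "real N > 0" using assms by simp
  have "0 \<le> t - real j / real N" using j1 N0 by (simp add: field_simps)
  moreover have "t - real j / real N < 1 / real N"
  proof -
    have "t - real j / real N = (real N * t - real j) / real N" using N0 by (simp add: field_simps)
    also have "\<dots> < 1 / real N" using j2 N0 by (intro divide_strict_right_mono) auto
    finally show ?thesis .
  qed
  ultimately have "\<bar>t - tau N j\<bar> < 1 / real N" unfolding tau_def by simp
  then show ?thesis using that jN by blast
qed

lemma Spsi_pos: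
  assumes "N \<ge> 1" "t \<in> {0..1}"
  shows "Spsi N t > 0"
proof -
  obtain j where j: "j < Suc N" "\<bar>t - tau N j\<bar> < 1 / real N" using near_node[OF assms] by blast
  have "0 < psi N j t" using j(2) by (simp add: psi_def)
  also have "\<dots> \<le> Spsi N t" unfolding Spsi_def
    by (rule member_le_sum) (use j(1) psi_nonneg in auto)
  finally show ?thesis .
qed

lemma Ux_cont:
  assumes "N \<ge> 1"
  shows "continuous_on {0..1} (Ux N x)"
proof -
  have c1: "continuous_on {0..1} (\<lambda>t. \<Sum>i<Suc N. x i * psi N i t)"
    unfolding psi_def by (intro continuous_intros)
  have c2: "continuous_on {0..1} (Spsi N)"
    unfolding Spsi_def psi_def by (intro continuous_intros)
  show ?thesis unfolding Ux_def
    by (rule continuous_on_divide[OF c1 c2]) (use Spsi_pos[OF assms] in force)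
qed

lemma Ux_bound:
  assumes "N \<ge> 1" "t \<in> {0..1}" "\<And>i. i < Suc N \<Longrightarrow> \<bar>x i\<bar> \<le> d"
  shows "\<bar>Ux N x t\<bar> \<le> d"
proof -
  have S: "Spsi N t > 0" using Spsi_pos[OF assms(1,2)] .
  have "\<bar>\<Sum>i<Suc N. x i * psi N i t\<bar> \<le> (\<Sum>i<Suc N. \<bar>x i * psi N i t\<bar>)" by (rule sum_abs)
  also have "\<dots> \<le> (\<Sum>i<Suc N. d * psi N i t)"
  proof (rule sum_mono)
    fix i assume "i \<in> {..<Suc N}"
    then show "\<bar>x i * psi N i t\<bar> \<le> d * psi N i t"
      using assms(3)[of i] psi_nonneg[of N i t] by (simp add: abs_mult mult_right_mono)
  qed
  also have "\<dots> = d * Spsi N t" unfolding Spsi_def by (rule sum_distrib_left[symmetric])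
  finally have "\<bar>\<Sum>i<Suc N. x i * psi N i t\<bar> \<le> d * Spsi N t" .
  then show ?thesis unfolding Ux_def using S by (simp add: abs_divide divide_le_eq)
qed

lemma Ux_diff: "Ux N x t - Ux N y t = Ux N (\<lambda>i. x i - y i) t"
  unfolding Ux_def by (simp add: diff_divide_distrib[symmetric] sum_subtractf left_diff_distrib)

lemma Ux_approx:
  assumes "N \<ge> 1" "t \<in> {0..1}" "\<And>i. i < Suc N \<Longrightarrow> \<bar>t - tau N i\<bar> < 1 / real N \<Longrightarrow> \<bar>x i - w\<bar> \<le> e"
  shows "\<bar>Ux N x t - w\<bar> \<le> e"
proof -
  have S: "Spsi N t > 0" using Spsi_pos[OF assms(1,2)] .
  have "Ux N x t - w = (\<Sum>i<Suc N. (x i - w) * psi N i t) / Spsi N t"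
    unfolding Ux_def using S
    by (simp add: field_simps sum_subtractf left_diff_distrib Spsi_def sum_distrib_left)
  moreover have "\<bar>\<Sum>i<Suc N. (x i - w) * psi N i t\<bar> \<le> e * Spsi N t"
  proof -
    have "\<bar>\<Sum>i<Suc N. (x i - w) * psi N i t\<bar> \<le> (\<Sum>i<Suc N. \<bar>(x i - w) * psi N i t\<bar>)" by (rule sum_abs)
    also have "\<dots> \<le> (\<Sum>i<Suc N. e * psi N i t)"
    proof (rule sum_mono)
      fix i assume i: "i \<in> {..<Suc N}"
      show "\<bar>(x i - w) * psi N i t\<bar> \<le> e * psi N i t"
      proof (cases "\<bar>t - tau N i\<bar> < 1 / real N")
        case True
        then show ?thesis using assms(3)[of i] i psi_nonneg[of N i t] by (simp add: abs_mult mult_right_mono)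
      next
        case False
        then have "psi N i t = 0" by (simp add: psi_def)
        then show ?thesis by simp
      qed
    qed
    also have "\<dots> = e * Spsi N t" unfolding Spsi_def by (rule sum_distrib_left[symmetric])
    finally show ?thesis .
  qed
  ultimately show ?thesis using S by (simp add: abs_divide divide_le_eq)
qed

locale ksetup =
  fixes \<rho> :: real and k :: "real \<Rightarrow> real \<Rightarrow> real" and g :: "(real \<Rightarrow> real) \<Rightarrow> real \<Rightarrow> real" and M :: real
  assumes rho: "\<rho> > 0"
    and k_cont: "continuous_on ({0..1} \<times> {0..1}) (\<lambda>(t, s). k t s)"
    and g_cont: "\<And>u. u \<in> closed_ball_C01 \<rho> \<Longrightarrow> continuous_on {0..1} (g u)"
    and g_bound: "\<And>u s. u \<in> closed_ball_C01 \<rho> \<Longrightarrow> s \<in> {0..1} \<Longrightarrow> \<bar>g u s\<bar> \<le> M"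
    and g_uc: "\<And>u e. u \<in> closed_ball_C01 \<rho> \<Longrightarrow> e > 0 \<Longrightarrow> \<exists>d>0. \<forall>v\<in>closed_ball_C01 \<rho>.
                 (\<forall>s\<in>{0..1}. \<bar>v s - u s\<bar> \<le> d) \<longrightarrow> (\<forall>s\<in>{0..1}. \<bar>g v s - g u s\<bar> \<le> e)"
begin

definition Tf :: "(real \<Rightarrow> real) \<Rightarrow> real \<Rightarrow> real" where
  "Tf u t = integral {0..1} (\<lambda>s. k t s * g u s)"

definition Kb :: real where
  "Kb = (SOME K. K > 0 \<and> (\<forall>t\<in>{0..1}. \<forall>s\<in>{0..1}. \<bar>k t s\<bar> \<le> K))"

lemma Kb: "Kb > 0" "\<And>t s. t \<in> {0..1} \<Longrightarrow> s \<in> {0..1} \<Longrightarrow> \<bar>k t s\<bar> \<le> Kb"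
proof -
  obtain K where "K > 0" "\<And>t s. t \<in> {0..1} \<Longrightarrow> s \<in> {0..1} \<Longrightarrow> \<bar>k t s\<bar> \<le> K"
    using k_bound[OF k_cont] by blast
  then have "\<exists>K. K > 0 \<and> (\<forall>t\<in>{0..1}. \<forall>s\<in>{0..1}. \<bar>k t s\<bar> \<le> K)" by blast
  then have "Kb > 0 \<and> (\<forall>t\<in>{0..1}. \<forall>s\<in>{0..1}. \<bar>k t s\<bar> \<le> Kb)"
    unfolding Kb_def by (rule someI_ex)
  then show "Kb > 0" "\<And>t s. t \<in> {0..1} \<Longrightarrow> s \<in> {0..1} \<Longrightarrow> \<bar>k t s\<bar> \<le> Kb" by auto
qed

lemma zero_in_ball: "(\<lambda>_. 0) \<in> closed_ball_C01 \<rho>"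
  by (rule in_ball_C01) (use rho in auto)

lemma M_nonneg: "M \<ge> 0"
  using g_bound[OF zero_in_ball, of 0] by simp

lemma integrand_cont:
  assumes "u \<in> closed_ball_C01 \<rho>" "t \<in> {0..1}"
  shows "continuous_on {0..1} (\<lambda>s. k t s * g u s)"
  by (intro continuous_intros k_cont_t[OF k_cont assms(2)] g_cont[OF assms(1)])

lemma Tf_bound:
  assumes "u \<in> closed_ball_C01 \<rho>" "t \<in> {0..1}"
  shows "\<bar>Tf u t\<bar> \<le> Kb * M"
proof -
  have "norm (integral {0..1} (\<lambda>s. k t s * g u s)) \<le> (Kb * M) * (1 - 0)"
  proof (rule integral_bound)
    show "continuous_on {0..1} (\<lambda>s. k t s * g u s)" by (rule integrand_cont[OF assms])
    fix s :: real assume s: "s \<in> {0..1}"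
    show "norm (k t s * g u s) \<le> Kb * M"
      unfolding real_norm_def abs_mult
      by (intro mult_mono Kb(2)[OF assms(2) s] g_bound[OF assms(1) s]) (use Kb(1) in auto)
  qed simp
  then show ?thesis unfolding Tf_def by simp
qed

lemma Tf_diff_u:
  assumes "u \<in> closed_ball_C01 \<rho>" "v \<in> closed_ball_C01 \<rho>" "t \<in> {0..1}"
    and "\<And>s. s \<in> {0..1} \<Longrightarrow> \<bar>g v s - g u s\<bar> \<le> e"
  shows "\<bar>Tf v t - Tf u t\<bar> \<le> Kb * e"
proof -
  have "Tf v t - Tf u t = integral {0..1} (\<lambda>s. k t s * g v s - k t s * g u s)"
    unfolding Tf_def
    by (rule integral_diff[symmetric]; rule integrable_continuous_interval; rule integrand_cont) (use assms in auto)
  also have "norm \<dots> \<le> (Kb * e) * (1 - 0)"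
  proof (rule integral_bound)
    show "continuous_on {0..1} (\<lambda>s. k t s * g v s - k t s * g u s)"
      by (intro continuous_intros integrand_cont assms)
    fix s :: real assume s: "s \<in> {0..1}"
    have "\<bar>k t s * g v s - k t s * g u s\<bar> = \<bar>k t s\<bar> * \<bar>g v s - g u s\<bar>"
      by (simp add: abs_mult right_diff_distrib[symmetric])
    also have "\<dots> \<le> Kb * e"
      by (intro mult_mono Kb(2)[OF assms(3) s] assms(4)[OF s]) (use Kb(1) in auto)
    finally show "norm (k t s * g v s - k t s * g u s) \<le> Kb * e" by simp
  qed simp
  finally show ?thesis by simp
qed

lemma Tf_diff_t:
  assumes "u \<in> closed_ball_C01 \<rho>" "t \<in> {0..1}" "t' \<in> {0..1}"
    and "\<And>s. s \<in> {0..1} \<Longrightarrow> \<bar>k t s - k t' s\<bar> \<le> e"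
  shows "\<bar>Tf u t - Tf u t'\<bar> \<le> e * M"
proof -
  have "Tf u t - Tf u t' = integral {0..1} (\<lambda>s. k t s * g u s - k t' s * g u s)"
    unfolding Tf_def
    by (rule integral_diff[symmetric]; rule integrable_continuous_interval; rule integrand_cont) (use assms in auto)
  also have "norm \<dots> \<le> (e * M) * (1 - 0)"
  proof (rule integral_bound)
    show "continuous_on {0..1} (\<lambda>s. k t s * g u s - k t' s * g u s)"
      by (intro continuous_intros integrand_cont assms)
    fix s :: real assume s: "s \<in> {0..1}"
    have "\<bar>k t s * g u s - k t' s * g u s\<bar> = \<bar>k t s - k t' s\<bar> * \<bar>g u s\<bar>"
      by (simp add: abs_mult left_diff_distrib[symmetric])
    also have "\<dots> \<le> e * M"
      by (intro mult_mono g_bound[OF assms(1) s] assms(4)[OF s]) (use assms(4)[OF s] in auto)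
    finally show "norm (k t s * g u s - k t' s * g u s) \<le> e * M" by simp
  qed simp
  finally show ?thesis by simp
qed

end

context ksetup begin

lemma step:
  assumes tr: "tr \<in> {0..1}" and eta: "\<eta> > 0"
    and nondeg: "\<And>t u. t \<in> {0..1} \<Longrightarrow> \<bar>t - tr\<bar> < \<delta> \<Longrightarrow> u \<in> closed_ball_C01 \<rho> \<Longrightarrow> \<eta> \<le> \<bar>Tf u t\<bar>"
    and N: "N \<ge> 1" "1 / real N < \<delta>" and sig: "\<bar>\<sigma>\<bar> = 1"
  shows "\<exists>lam u. u \<in> closed_ball_C01 \<rho> \<and> \<sigma> * lam \<ge> \<rho> / (Kb * M) \<and> \<bar>lam\<bar> \<le> \<rho> / \<eta> \<and>
     (\<exists>t\<in>{0..1}. \<bar>lam * Tf u t\<bar> = \<rho>) \<and>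
     (\<forall>t\<in>{0..1}. \<forall>e. (\<forall>t'\<in>{0..1}. \<bar>t - t'\<bar> < 1 / real N \<longrightarrow> \<bar>lam * Tf u t' - lam * Tf u t\<bar> \<le> e)
         \<longrightarrow> \<bar>u t - lam * Tf u t\<bar> \<le> e)"
proof -
  define n where "n = Suc N"
  define Q where "Q = cube n \<rho>"
  define c where "c = (\<lambda>x i. Tf (Ux N x) (tau N i))"
  define m where "m = (\<lambda>x. Max ((\<lambda>i. \<bar>c x i\<bar>) ` {..<n}))"
  define Phi where "Phi = (\<lambda>x i. if i < n then \<sigma> * \<rho> * (c x i / m x) else 0)"
  have fin: "finite {..<n}" "{..<n} \<noteq> {}" unfolding n_def by auto
  have UB: "Ux N x \<in> closed_ball_C01 \<rho>" if "x \<in> Q" for x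
    by (rule in_ball_C01[OF Ux_cont[OF N(1)] Ux_bound[OF N(1)]]) (use that in \<open>auto simp: Q_def cube_def n_def\<close>)
  obtain j0 where j0: "j0 < n" "\<bar>tr - tau N j0\<bar> < 1 / real N"
    using near_node[OF N(1) tr] unfolding n_def by blast
  have tauin: "tau N i \<in> {0..1}" if "i < n" for i using tau_in[OF N(1)] that unfolding n_def by blast
  have cle: "\<bar>c x i\<bar> \<le> m x" if "i < n" for x i
    unfolding m_def by (rule Max_ge) (use that fin in auto)
  have mpos: "\<eta> \<le> m x" if "x \<in> Q" for x
  proof -
    have "\<eta> \<le> \<bar>c x j0\<bar>" unfolding c_def
      by (rule nondeg[OF tauin[OF j0(1)] _ UB[OF that]]) (use j0(2) N(2) in \<open>simp add: abs_minus_commute\<close>)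
    also have "\<dots> \<le> m x" by (rule cle[OF j0(1)])
    finally show ?thesis .
  qed
  have mle: "m x \<le> Kb * M" if "x \<in> Q" for x
    unfolding m_def using fin
    by (subst Max_le_iff) (auto simp: c_def intro!: Tf_bound[OF UB[OF that] tauin])
  have into: "Phi x \<in> Q" if "x \<in> Q" for x
  proof -
    have "\<bar>Phi x i\<bar> \<le> \<rho>" if i: "i < n" for i
    proof -
      have mp: "m x > 0" using mpos[OF \<open>x \<in> Q\<close>] eta by simp
      have "\<bar>Phi x i\<bar> = \<rho> * (\<bar>c x i\<bar> / m x)" unfolding Phi_def using i sig rho mp
        by (simp add: abs_mult abs_divide)
      also have "\<dots> \<le> \<rho> * 1" using cle[OF i, of x] mp rho
        by (intro mult_left_mono) (auto simp: divide_le_eq)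
      finally show ?thesis by simp
    qed
    then show ?thesis unfolding Q_def cube_def Phi_def by auto
  qed
  have cont: "\<exists>d>0. \<forall>y\<in>Q. (\<forall>i<n. \<bar>y i - x i\<bar> < d) \<longrightarrow> (\<forall>i<n. \<bar>Phi y i - Phi x i\<bar> < e)"
    if x: "x \<in> Q" and e: "e > 0" for x e
  proof -
    define e1 where "e1 = e * \<eta> / (4 * \<rho> * Kb)"
    have e1: "e1 > 0" unfolding e1_def using e eta rho Kb(1) by simp
    obtain d where d: "d > 0" "\<forall>v\<in>closed_ball_C01 \<rho>. (\<forall>s\<in>{0..1}. \<bar>v s - Ux N x s\<bar> \<le> d) \<longrightarrow>
        (\<forall>s\<in>{0..1}. \<bar>g v s - g (Ux N x) s\<bar> \<le> e1)"
      using g_uc[OF UB[OF x] e1] by blast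
    show ?thesis
    proof (intro exI conjI ballI impI allI)
      show "d > 0" by fact
      fix y i assume y: "y \<in> Q" and close: "\<forall>i<n. \<bar>y i - x i\<bar> < d" and i: "i < n"
      have "\<forall>s\<in>{0..1}. \<bar>Ux N y s - Ux N x s\<bar> \<le> d"
      proof
        fix s :: real assume s: "s \<in> {0..1}"
        show "\<bar>Ux N y s - Ux N x s\<bar> \<le> d" unfolding Ux_diff
          by (rule Ux_bound[OF N(1) s]) (use close in \<open>auto simp: n_def less_imp_le\<close>)
      qed
      then have gcl: "\<forall>s\<in>{0..1}. \<bar>g (Ux N y) s - g (Ux N x) s\<bar> \<le> e1" using d(2) UB[OF y] by blast
      have ccl: "\<bar>c y j - c x j\<bar> \<le> Kb * e1" if "j \<in> {..<n}" for j
        unfolding c_def by (rule Tf_diff_u[OF UB[OF x] UB[OF y] tauin]) (use that gcl in auto)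
      have mcl: "\<bar>m y - m x\<bar> \<le> Kb * e1" unfolding m_def by (rule max_lip[OF fin(2,1) ccl])
      have "\<bar>c y i / m y - c x i / m x\<bar> \<le> 2 * (Kb * e1) / \<eta>"
        by (rule ratio_bound) (use mpos[OF x] mpos[OF y] eta cle[OF i] ccl[of i] i mcl in auto)
      also have "\<dots> = e / (2 * \<rho>)" unfolding e1_def using eta rho Kb(1) by (simp add: field_simps)
      finally have r: "\<bar>c y i / m y - c x i / m x\<bar> \<le> e / (2 * \<rho>)" .
      have "Phi y i - Phi x i = (\<sigma> * \<rho>) * (c y i / m y - c x i / m x)"
        unfolding Phi_def using i by (simp add: right_diff_distrib)
      then have "\<bar>Phi y i - Phi x i\<bar> = \<bar>\<sigma>\<bar> * \<bar>\<rho>\<bar> * \<bar>c y i / m y - c x i / m x\<bar>"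
        by (simp add: abs_mult)
      then have "\<bar>Phi y i - Phi x i\<bar> = \<rho> * \<bar>c y i / m y - c x i / m x\<bar>"
        using sig rho by simp
      also have "\<dots> \<le> \<rho> * (e / (2 * \<rho>))" using r rho by (intro mult_left_mono) auto
      also have "\<dots> < e" using rho e by simp
      finally show "\<bar>Phi y i - Phi x i\<bar> < e" .
    qed
  qed
  obtain x where x: "x \<in> Q" "Phi x = x"
    using brouwer_cube[OF rho, of n Phi] into cont unfolding Q_def by blast
  define lam where "lam = \<sigma> * \<rho> / m x"
  define u where "u = Ux N x"
  have mp: "m x > 0" using mpos[OF x(1)] eta by simp
  have node: "x i = lam * Tf u (tau N i)" if "i < n" for i
  proof -
    have "x i = Phi x i" using x(2) by simp
    also have "\<dots> = lam * Tf u (tau N i)" unfolding Phi_def lam_def u_def c_def using that by simp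
    finally show ?thesis .
  qed
  show ?thesis
  proof (intro exI conjI ballI allI impI)
    show "u \<in> closed_ball_C01 \<rho>" unfolding u_def by (rule UB[OF x(1)])
    have s2: "\<sigma> * \<sigma> = 1" using sig by (metis abs_mult_self_eq mult_1)
    have "\<sigma> * lam = \<rho> / m x" unfolding lam_def using s2 by (simp add: mult.assoc[symmetric])
    moreover have "\<rho> / (Kb * M) \<le> \<rho> / m x"
      using mle[OF x(1)] mp rho by (intro divide_left_mono) auto
    ultimately show "\<rho> / (Kb * M) \<le> \<sigma> * lam" by simp
    have "\<bar>lam\<bar> = \<rho> / m x" unfolding lam_def using sig rho mp by (simp add: abs_mult abs_divide)
    also have "\<dots> \<le> \<rho> / \<eta>" using mpos[OF x(1)] eta rho by (intro divide_left_mono) auto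
    finally show "\<bar>lam\<bar> \<le> \<rho> / \<eta>" .
    have "m x \<in> (\<lambda>i. \<bar>c x i\<bar>) ` {..<n}" unfolding m_def by (rule Max_in) (use fin in auto)
    then obtain i where i: "i < n" "\<bar>c x i\<bar> = m x" by auto
    show "\<exists>t\<in>{0..1}. \<bar>lam * Tf u t\<bar> = \<rho>"
    proof (intro bexI)
      have "\<bar>lam * Tf u (tau N i)\<bar> = \<rho> / m x * \<bar>c x i\<bar>"
        unfolding lam_def u_def c_def using sig rho mp by (simp add: abs_mult abs_divide)
      then show "\<bar>lam * Tf u (tau N i)\<bar> = \<rho>" using i(2) mp by simp
    qed (rule tauin[OF i(1)])
  next
    fix t e assume t: "t \<in> {0..1}"
      and h: "\<forall>t'\<in>{0..1}. \<bar>t - t'\<bar> < 1 / real N \<longrightarrow> \<bar>lam * Tf u t' - lam * Tf u t\<bar> \<le> e"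
    show "\<bar>u t - lam * Tf u t\<bar> \<le> e" unfolding u_def
    proof (rule Ux_approx[OF N(1) t])
      fix i assume i: "i < Suc N" "\<bar>t - tau N i\<bar> < 1 / real N"
      have "x i = lam * Tf u (tau N i)" using node i(1) unfolding n_def by blast
      then show "\<bar>x i - lam * Tf (Ux N x) t\<bar> \<le> e"
        using h[rule_format, OF tau_in[OF N(1) i(1)] i(2)] unfolding u_def by simp
    qed
  qed
qed

end

context ksetup begin

lemma core:
  assumes tr: "tr \<in> {0..1}" and eta: "\<eta> > 0" and delta: "\<delta> > 0"
    and nondeg: "\<And>t u. t \<in> {0..1} \<Longrightarrow> \<bar>t - tr\<bar> < \<delta> \<Longrightarrow> u \<in> closed_ball_C01 \<rho> \<Longrightarrow> \<eta> \<le> \<bar>Tf u t\<bar>"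
    and sig: "\<bar>\<sigma>\<bar> = 1"
  shows "\<exists>lam u. \<sigma> * lam > 0 \<and> u \<in> sphere_C01 \<rho> \<and> (\<forall>t\<in>{0..1}. u t = lam * Tf u t)"
proof -
  have KMpos: "Kb * M > 0"
  proof -
    have "\<eta> \<le> \<bar>Tf (\<lambda>_. 0) tr\<bar>" by (rule nondeg[OF tr _ zero_in_ball]) (use delta in simp)
    also have "\<dots> \<le> Kb * M" by (rule Tf_bound[OF zero_in_ball tr])
    finally show ?thesis using eta by simp
  qed
  obtain N0 :: nat where N0: "1 / \<delta> < real N0" using reals_Archimedean2 by blast
  define NN where "NN = (\<lambda>n::nat. n + N0 + 1)"
  have NN1: "NN n \<ge> 1" for n unfolding NN_def by simp
  have NNd: "1 / real (NN n) < \<delta>" for n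
  proof -
    have "1 / \<delta> < real (NN n)" using N0 unfolding NN_def by simp
    then show ?thesis using delta by (simp add: divide_less_eq mult.commute)
  qed
  define P where "P = (\<lambda>n lam u. u \<in> closed_ball_C01 \<rho> \<and> \<sigma> * lam \<ge> \<rho> / (Kb * M) \<and> \<bar>lam\<bar> \<le> \<rho> / \<eta> \<and>
     (\<exists>t\<in>{0..1}. \<bar>lam * Tf u t\<bar> = \<rho>) \<and>
     (\<forall>t\<in>{0..1}. \<forall>e. (\<forall>t'\<in>{0..1}. \<bar>t - t'\<bar> < 1 / real (NN n) \<longrightarrow> \<bar>lam * Tf u t' - lam * Tf u t\<bar> \<le> e)
         \<longrightarrow> \<bar>u t - lam * Tf u t\<bar> \<le> e))"
  have "\<forall>n. \<exists>p. P n (fst p) (snd p)"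
  proof
    fix n
    obtain lam u where "P n lam u"
      using step[OF tr eta nondeg NN1 NNd sig] unfolding P_def by blast
    then show "\<exists>p. P n (fst p) (snd p)" by (intro exI[of _ "(lam, u)"]) simp
  qed
  then obtain pp where pp: "\<And>n. P n (fst (pp n)) (snd (pp n))" by metis
  define L where "L = (\<lambda>n. fst (pp n))"
  define U where "U = (\<lambda>n. snd (pp n))"
  define W where "W = (\<lambda>n t. L n * Tf (U n) t)"
  have UB: "U n \<in> closed_ball_C01 \<rho>" for n using pp[of n] unfolding P_def U_def by blast
  have Llow: "\<sigma> * L n \<ge> \<rho> / (Kb * M)" for n using pp[of n] unfolding P_def L_def by blast
  have Lb: "\<bar>L n\<bar> \<le> \<rho> / \<eta>" for n using pp[of n] unfolding P_def L_def by blast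
  have Wrho: "\<exists>t\<in>{0..1}. \<bar>W n t\<bar> = \<rho>" for n using pp[of n] unfolding P_def L_def U_def W_def by blast
  have Wapp: "\<And>t e. t \<in> {0..1} \<Longrightarrow> (\<forall>t'\<in>{0..1}. \<bar>t - t'\<bar> < 1 / real (NN n) \<longrightarrow> \<bar>W n t' - W n t\<bar> \<le> e)
         \<Longrightarrow> \<bar>U n t - W n t\<bar> \<le> e" for n
    using pp[of n] unfolding P_def L_def U_def W_def by blast
  define Cw where "Cw = \<rho> / \<eta>"
  have Cw: "Cw > 0" unfolding Cw_def using rho eta by simp
  have Wbound: "\<bar>W n t\<bar> \<le> Cw * (Kb * M)" if "t \<in> {0..1}" for n t
  proof -
    have "\<bar>W n t\<bar> = \<bar>L n\<bar> * \<bar>Tf (U n) t\<bar>" unfolding W_def by (simp add: abs_mult)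
    also have "\<dots> \<le> Cw * (Kb * M)"
      using Lb[of n] Tf_bound[OF UB that] unfolding Cw_def by (intro mult_mono) auto
    finally show ?thesis .
  qed
  have Wequi: "\<exists>d>0. \<forall>n. \<forall>t\<in>{0..1}. \<forall>t'\<in>{0..1}. \<bar>t - t'\<bar> < d \<longrightarrow> \<bar>W n t - W n t'\<bar> \<le> e"
    if e: "e > 0" for e
  proof -
    define e' where "e' = e / (Cw * M + 1)"
    have e': "e' > 0" unfolding e'_def using e Cw M_nonneg by (simp add: add_nonneg_pos)
    obtain d where d: "d > 0" "\<forall>t\<in>{0..1}. \<forall>t'\<in>{0..1}. \<forall>s\<in>{0..1}. \<bar>t - t'\<bar> < d \<longrightarrow> \<bar>k t s - k t' s\<bar> < e'"
      using k_unif[OF k_cont e'] by blast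
    show ?thesis
    proof (intro exI conjI allI ballI impI)
      show "d > 0" by fact
      fix n :: nat and t t' :: real assume t: "t \<in> {0..1}" "t' \<in> {0..1}" "\<bar>t - t'\<bar> < d"
      have "\<bar>Tf (U n) t - Tf (U n) t'\<bar> \<le> e' * M"
        by (rule Tf_diff_t[OF UB t(1,2)]) (use d(2) t in \<open>auto intro: less_imp_le\<close>)
      have "\<bar>W n t - W n t'\<bar> = \<bar>L n\<bar> * \<bar>Tf (U n) t - Tf (U n) t'\<bar>"
        unfolding W_def by (simp add: abs_mult right_diff_distrib[symmetric])
      also have "\<dots> \<le> Cw * (e' * M)"
        using Lb[of n] \<open>\<bar>Tf (U n) t - Tf (U n) t'\<bar> \<le> e' * M\<close> rho eta unfolding Cw_def
        by (intro mult_mono) auto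
      also have "\<dots> = e' * (Cw * M)" by simp
      also have "\<dots> \<le> e' * (Cw * M + 1)" using e' by simp
      also have "\<dots> = e" unfolding e'_def using mult_nonneg_nonneg[OF less_imp_le[OF Cw] M_nonneg] by simp
      finally show "\<bar>W n t - W n t'\<bar> \<le> e" .
    qed
  qed
  have UWclose: "\<exists>n0. \<forall>n\<ge>n0. \<forall>t\<in>{0..1}. \<bar>U n t - W n t\<bar> \<le> e" if e: "e > 0" for e
  proof -
    obtain d where d: "d > 0" "\<forall>n. \<forall>t\<in>{0..1}. \<forall>t'\<in>{0..1}. \<bar>t - t'\<bar> < d \<longrightarrow> \<bar>W n t - W n t'\<bar> \<le> e"
      using Wequi[OF e] by blast
    obtain n0 :: nat where n0: "1 / d < real n0" using reals_Archimedean2 by blast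
    show ?thesis
    proof (intro exI allI impI ballI)
      fix n :: nat and t :: real assume n: "n \<ge> n0" and t: "t \<in> {0..1}"
      have "1 / d < real (NN n)" using n0 n unfolding NN_def by simp
      then have Nd: "1 / real (NN n) < d" using d(1) by (simp add: divide_less_eq mult.commute)
      show "\<bar>U n t - W n t\<bar> \<le> e"
      proof (rule Wapp[OF t], intro ballI impI)
        fix t' assume "t' \<in> {0..1}" "\<bar>t - t'\<bar> < 1 / real (NN n)"
        then show "\<bar>W n t' - W n t\<bar> \<le> e" using d(2) t Nd by (simp add: abs_minus_commute)
      qed
    qed
  qed
  have "compact {- Cw..Cw}" by simp
  then have "seq_compact {- Cw..Cw}" by (rule compact_imp_seq_compact)
  moreover have "\<forall>n. L n \<in> {- Cw..Cw}"
  proof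
    fix n
    have "\<bar>L n\<bar> \<le> Cw" using Lb[of n] unfolding Cw_def .
    then show "L n \<in> {- Cw..Cw}" by (simp add: abs_le_iff)
  qed
  ultimately obtain Lam r1 where r1: "strict_mono r1" "(L \<circ> r1) \<longlonglongrightarrow> Lam" by (rule seq_compactE) blast
  obtain w :: "real \<Rightarrow> real" and r2 :: "nat \<Rightarrow> nat" where w: "continuous_on {0..1} w" and r2: "strict_mono r2"
    and wconv: "\<And>e. 0 < e \<Longrightarrow> \<exists>N. \<forall>n x. n \<ge> N \<and> x \<in> {0..1} \<longrightarrow> norm (W (r1 (r2 n)) x - w x) < e"
  proof (rule Arzela_Ascoli[of "{0..1}" "\<lambda>j. W (r1 j)" "Cw * (Kb * M)"])
    show "compact {0..1::real}" by simp
    show "\<And>n x. x \<in> {0..1} \<Longrightarrow> norm (W (r1 n) x) \<le> Cw * (Kb * M)" using Wbound by simp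
    fix x :: real and e :: real assume x: "x \<in> {0..1}" and e: "0 < e"
    obtain d where d: "d > 0" "\<forall>n. \<forall>t\<in>{0..1}. \<forall>t'\<in>{0..1}. \<bar>t - t'\<bar> < d \<longrightarrow> \<bar>W n t - W n t'\<bar> \<le> e / 2"
      using Wequi[of "e / 2"] e by auto
    show "\<exists>d>0. \<forall>n y. y \<in> {0..1} \<and> norm (x - y) < d \<longrightarrow> norm (W (r1 n) x - W (r1 n) y) < e"
    proof (intro exI[of _ d] conjI allI impI)
      fix n y assume y: "y \<in> {0..1} \<and> norm (x - y) < d"
      then have "\<bar>W (r1 n) x - W (r1 n) y\<bar> \<le> e / 2" using d(2) x by simp
      then show "norm (W (r1 n) x - W (r1 n) y) < e" using e by simp
    qed (rule d(1))
  next
    fix gg kk assume "continuous_on {0..1} gg" "strict_mono (kk :: nat \<Rightarrow> nat)"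
      "\<And>e. 0 < e \<Longrightarrow> \<exists>N. \<forall>n x. n \<ge> N \<and> x \<in> {0..1} \<longrightarrow> norm (W (r1 (kk n)) x - gg x) < e"
    then show thesis by (rule that)
  qed
  define r where "r = r1 \<circ> r2"
  have r: "strict_mono r" unfolding r_def using r1(1) r2 by (rule strict_mono_o)
  have Lr: "(\<lambda>j. L (r j)) \<longlonglongrightarrow> Lam"
    using LIMSEQ_subseq_LIMSEQ[OF r1(2) r2] unfolding r_def by (simp add: o_def)
  have Wr: "\<exists>J. \<forall>j\<ge>J. \<forall>t\<in>{0..1}. \<bar>W (r j) t - w t\<bar> < e" if e: "e > 0" for e
  proof -
    obtain N where N: "\<forall>n x. n \<ge> N \<and> x \<in> {0..1} \<longrightarrow> norm (W (r1 (r2 n)) x - w x) < e"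
      using wconv[OF e] by blast
    show ?thesis by (rule exI[of _ N]) (use N in \<open>simp add: r_def\<close>)
  qed
  have Ur: "\<exists>J. \<forall>j\<ge>J. \<forall>t\<in>{0..1}. \<bar>U (r j) t - w t\<bar> \<le> e" if e: "e > 0" for e
  proof -
    obtain n0 where n0: "\<forall>n\<ge>n0. \<forall>t\<in>{0..1}. \<bar>U n t - W n t\<bar> \<le> e / 2" using UWclose[of "e/2"] e by auto
    obtain J where J: "\<forall>j\<ge>J. \<forall>t\<in>{0..1}. \<bar>W (r j) t - w t\<bar> < e / 2" using Wr[of "e/2"] e by auto
    show ?thesis
    proof (intro exI allI impI ballI)
      fix j :: nat and t :: real assume j: "j \<ge> max J n0" and t: "t \<in> {0..1}"
      have "r j \<ge> n0" using seq_suble[OF r, of j] j by simp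
      then have "\<bar>U (r j) t - W (r j) t\<bar> \<le> e / 2" using n0 t by blast
      moreover have "\<bar>W (r j) t - w t\<bar> < e / 2" using J j t by simp
      ultimately show "\<bar>U (r j) t - w t\<bar> \<le> e" by linarith
    qed
  qed
  have wle: "\<bar>w t\<bar> \<le> \<rho>" if t: "t \<in> {0..1}" for t
  proof (rule field_le_epsilon)
    fix e :: real assume e: "e > 0"
    obtain J where "\<forall>j\<ge>J. \<forall>t\<in>{0..1}. \<bar>U (r j) t - w t\<bar> \<le> e" using Ur[OF e] by blast
    then have "\<bar>U (r J) t - w t\<bar> \<le> e" using t by blast
    moreover have "\<bar>U (r J) t\<bar> \<le> \<rho>" using ball_C01_D(1)[OF UB t] .
    ultimately show "\<bar>w t\<bar> \<le> \<rho> + e" by linarith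
  qed
  have wB: "w \<in> closed_ball_C01 \<rho>" by (rule in_ball_C01[OF w wle])
  have wge: "\<rho> \<le> supnorm w"
  proof (rule field_le_epsilon)
    fix e :: real assume e: "e > 0"
    obtain J where J: "\<forall>j\<ge>J. \<forall>t\<in>{0..1}. \<bar>W (r j) t - w t\<bar> < e" using Wr[OF e] by blast
    obtain t where t: "t \<in> {0..1}" "\<bar>W (r J) t\<bar> = \<rho>" using Wrho by blast
    have "\<bar>W (r J) t - w t\<bar> < e" using J t(1) by blast
    moreover have "\<bar>w t\<bar> \<le> supnorm w" by (rule supnorm_ge[OF w t(1)])
    ultimately show "\<rho> \<le> supnorm w + e" using t(2) by linarith
  qed
  have wsph: "w \<in> sphere_C01 \<rho>"
    using wB wge unfolding closed_ball_C01_def sphere_C01_def by auto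
  have eq: "w t = Lam * Tf w t" if t: "t \<in> {0..1}" for t
  proof -
    have a: "(\<lambda>j. W (r j) t) \<longlonglongrightarrow> w t"
    proof (rule LIMSEQ_I)
      fix e :: real assume "e > 0"
      then obtain J where "\<forall>j\<ge>J. \<forall>t\<in>{0..1}. \<bar>W (r j) t - w t\<bar> < e" using Wr by blast
      then show "\<exists>no. \<forall>n\<ge>no. norm (W (r n) t - w t) < e" using t by (intro exI[of _ J]) auto
    qed
    have b: "(\<lambda>j. Tf (U (r j)) t) \<longlonglongrightarrow> Tf w t"
    proof (rule LIMSEQ_I)
      fix e :: real assume e: "e > 0"
      define e1 where "e1 = e / (2 * Kb)"
      have e1: "e1 > 0" unfolding e1_def using e Kb(1) by simp
      obtain d where d: "d > 0" "\<forall>v\<in>closed_ball_C01 \<rho>. (\<forall>s\<in>{0..1}. \<bar>v s - w s\<bar> \<le> d) \<longrightarrow>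
          (\<forall>s\<in>{0..1}. \<bar>g v s - g w s\<bar> \<le> e1)"
        using g_uc[OF wB e1] by blast
      obtain J where J: "\<forall>j\<ge>J. \<forall>s\<in>{0..1}. \<bar>U (r j) s - w s\<bar> \<le> d" using Ur[OF d(1)] by blast
      show "\<exists>no. \<forall>n\<ge>no. norm (Tf (U (r n)) t - Tf w t) < e"
      proof (intro exI allI impI)
        fix j assume j: "j \<ge> J"
        have cl: "\<forall>s\<in>{0..1}. \<bar>U (r j) s - w s\<bar> \<le> d" using J j by blast
        have gcl: "\<forall>s\<in>{0..1}. \<bar>g (U (r j)) s - g w s\<bar> \<le> e1"
          using d(2) UB[of "r j"] cl by blast
        have "\<bar>Tf (U (r j)) t - Tf w t\<bar> \<le> Kb * e1"
          by (rule Tf_diff_u[OF wB UB t]) (use gcl in blast)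
        also have "\<dots> < e" unfolding e1_def using Kb(1) e by simp
        finally show "norm (Tf (U (r j)) t - Tf w t) < e" by simp
      qed
    qed
    have "(\<lambda>j. L (r j) * Tf (U (r j)) t) \<longlonglongrightarrow> Lam * Tf w t" by (rule tendsto_mult[OF Lr b])
    then have "(\<lambda>j. W (r j) t) \<longlonglongrightarrow> Lam * Tf w t" unfolding W_def .
    from LIMSEQ_unique[OF a this] show ?thesis .
  qed
  have "(\<lambda>j. \<sigma> * L (r j)) \<longlonglongrightarrow> \<sigma> * Lam" by (intro tendsto_intros Lr)
  then have "\<rho> / (Kb * M) \<le> \<sigma> * Lam" by (rule LIMSEQ_le_const) (use Llow in blast)
  moreover have "\<rho> / (Kb * M) > 0" using rho KMpos by simp
  ultimately have "\<sigma> * Lam > 0" by linarith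
  then show ?thesis using wsph eq by blast
qed

end

lemma kint_diff:
  fixes k :: "real \<Rightarrow> real \<Rightarrow> real"
  assumes k_cont: "continuous_on ({0..1} \<times> {0..1}) (\<lambda>(t, s). k t s)"
    and h: "continuous_on {0..1} h" "\<And>s. s \<in> {0..1} \<Longrightarrow> \<bar>h s\<bar> \<le> Mh"
    and t: "t \<in> {0..1}" "t' \<in> {0..1}" and e: "\<And>s. s \<in> {0..1} \<Longrightarrow> \<bar>k t s - k t' s\<bar> \<le> e"
  shows "\<bar>integral {0..1} (\<lambda>s. k t s * h s) - integral {0..1} (\<lambda>s. k t' s * h s)\<bar> \<le> e * Mh"
proof -
  have c: "continuous_on {0..1} (\<lambda>s. k t s * h s)" "continuous_on {0..1} (\<lambda>s. k t' s * h s)"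
    by (intro continuous_intros k_cont_t[OF k_cont] t h)+
  have "integral {0..1} (\<lambda>s. k t s * h s) - integral {0..1} (\<lambda>s. k t' s * h s) =
      integral {0..1} (\<lambda>s. k t s * h s - k t' s * h s)"
    by (rule integral_diff[symmetric]; rule integrable_continuous_interval; rule c)
  also have "norm \<dots> \<le> (e * Mh) * (1 - 0)"
  proof (rule integral_bound)
    show "continuous_on {0..1} (\<lambda>s. k t s * h s - k t' s * h s)" by (intro continuous_intros c)
    fix s :: real assume s: "s \<in> {0..1}"
    have "\<bar>k t s * h s - k t' s * h s\<bar> = \<bar>k t s - k t' s\<bar> * \<bar>h s\<bar>"
      by (simp add: abs_mult left_diff_distrib[symmetric])
    also have "\<dots> \<le> e * Mh"
      by (intro mult_mono h(2)[OF s] e[OF s]) (use e[OF s] in auto)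
    finally show "norm (k t s * h s - k t' s * h s) \<le> e * Mh" by simp
  qed simp
  finally show ?thesis by simp
qed

theorem theorem2p2:
  fixes \<rho> Hlo Hhi :: real
    and k :: "real \<Rightarrow> real \<Rightarrow> real"
    and H :: "(real \<Rightarrow> real) \<Rightarrow> real"
    and f :: "real \<Rightarrow> real \<Rightarrow> real \<Rightarrow> real"
    and flo fhi :: "real \<Rightarrow> real"
  defines "Flo \<equiv> (\<lambda>t. integral {0..1} (\<lambda>s. k t s * flo s))"
    and "Fhi \<equiv> (\<lambda>t. integral {0..1} (\<lambda>s. k t s * fhi s))"
  assumes rho_pos: "\<rho> > 0"
    and k_cont: "continuous_on ({0..1} \<times> {0..1}) (\<lambda>(t, s). k t s)"
    and k_nonneg: "\<And>t s. t \<in> {0..1} \<Longrightarrow> s \<in> {0..1} \<Longrightarrow> k t s \<ge> 0"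
    and H_cont: "functional_continuous_on (closed_ball_C01 \<rho>) H"
    and H_bounds: "\<And>u. u \<in> closed_ball_C01 \<rho> \<Longrightarrow> Hlo \<le> H u \<and> H u \<le> Hhi"
    and f_cont: "continuous_on ({0..1} \<times> {-\<rho>..\<rho>} \<times> {Hlo..Hhi}) (\<lambda>(t, u, v). f t u v)"
    and flo_cont: "continuous_on {0..1} flo"
    and fhi_cont: "continuous_on {0..1} fhi"
    and f_bounds: "\<And>t u v. t \<in> {0..1} \<Longrightarrow> u \<in> {-\<rho>..\<rho>} \<Longrightarrow> v \<in> {Hlo..Hhi} \<Longrightarrow>
                     flo t \<le> f t u v \<and> f t u v \<le> fhi t"
    and cond5: "(\<exists>t\<in>{0..1}. Fhi t < 0) \<or> (\<exists>t\<in>{0..1}. Flo t > 0)"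
  shows "(\<exists>lp lm up um. lp > 0 \<and> lm < 0 \<and> up \<in> sphere_C01 \<rho> \<and> um \<in> sphere_C01 \<rho> \<and>
            (\<forall>t\<in>{0..1}. up t = lp * integral {0..1} (\<lambda>s. k t s * f s (up s) (H up))) \<and>
            (\<forall>t\<in>{0..1}. um t = lm * integral {0..1} (\<lambda>s. k t s * f s (um s) (H um))))
       \<and> (\<forall>lam u. u \<in> closed_ball_C01 \<rho> \<and>
            (\<forall>t\<in>{0..1}. u t = lam * integral {0..1} (\<lambda>s. k t s * f s (u s) (H u))) \<longrightarrow>
            (\<forall>tr\<in>{0..1}. Fhi tr < 0 \<longrightarrow> \<bar>lam\<bar> \<le> - \<rho> / Fhi tr) \<and>
            (\<forall>tr\<in>{0..1}. Flo tr > 0 \<longrightarrow> \<bar>lam\<bar> \<le> \<rho> / Flo tr))"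
proof -
  define g where "g = (\<lambda>u s. f s (u s) (H u))"
  define Pi where "Pi = {0..1::real} \<times> {-\<rho>..\<rho>} \<times> {Hlo..Hhi}"
  have cPi: "compact Pi" unfolding Pi_def by (intro compact_Times compact_Icc)
  have fc: "continuous_on Pi (\<lambda>(t, u, v). f t u v)" using f_cont unfolding Pi_def .
  obtain Mf where Mf: "Mf \<ge> 0" "\<And>p. p \<in> Pi \<Longrightarrow> norm ((\<lambda>(t, u, v). f t u v) p) \<le> Mf"
    using continuous_on_compact_bound[OF cPi fc] by blast
  have inPi: "(s, u s, H u) \<in> Pi" if "u \<in> closed_ball_C01 \<rho>" "s \<in> {0..1}" for u s
    using ball_C01_D(1)[OF that] H_bounds[OF that(1)] that(2) unfolding Pi_def by auto
  have ucont: "continuous_on {0..1} u" if "u \<in> closed_ball_C01 \<rho>" for u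
    using that unfolding closed_ball_C01_def C01_def by simp
  have gc: "continuous_on {0..1} (g u)" if u: "u \<in> closed_ball_C01 \<rho>" for u
  proof -
    have "continuous_on {0..1} ((\<lambda>(t, u, v). f t u v) \<circ> (\<lambda>s. (s, u s, H u)))"
    proof (rule continuous_on_compose)
      show "continuous_on {0..1} (\<lambda>s. (s, u s, H u))"
        by (intro continuous_intros ucont[OF u])
      show "continuous_on ((\<lambda>s. (s, u s, H u)) ` {0..1}) (\<lambda>(t, u, v). f t u v)"
        by (rule continuous_on_subset[OF fc]) (use inPi[OF u] in auto)
    qed
    then show ?thesis unfolding g_def by (simp add: o_def)
  qed
  have gb: "\<bar>g u s\<bar> \<le> Mf" if "u \<in> closed_ball_C01 \<rho>" "s \<in> {0..1}" for u s
    using Mf(2)[OF inPi[OF that]] unfolding g_def by simp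
  have uc: "uniformly_continuous_on Pi (\<lambda>(t, u, v). f t u v)"
    by (rule compact_uniformly_continuous[OF fc cPi])
  have guc: "\<exists>d>0. \<forall>v\<in>closed_ball_C01 \<rho>.
      (\<forall>s\<in>{0..1}. \<bar>v s - u s\<bar> \<le> d) \<longrightarrow> (\<forall>s\<in>{0..1}. \<bar>g v s - g u s\<bar> \<le> e)"
    if u: "u \<in> closed_ball_C01 \<rho>" and e: "e > 0" for u e
  proof -
    obtain df where df: "df > 0" "\<forall>x\<in>Pi. \<forall>x'\<in>Pi. dist x' x < df \<longrightarrow>
        dist ((\<lambda>(t, u, v). f t u v) x') ((\<lambda>(t, u, v). f t u v) x) < e"
      using uc e unfolding uniformly_continuous_on_def by blast
    have df2: "df / 2 > 0" using df(1) by simp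
    obtain dH where dH: "dH > 0" "\<forall>v\<in>closed_ball_C01 \<rho>. supnorm (\<lambda>t. v t - u t) < dH \<longrightarrow> \<bar>H v - H u\<bar> < df / 2"
      using H_cont u df2 unfolding functional_continuous_on_def by blast
    define d where "d = min (df / 4) (dH / 2)"
    show ?thesis
    proof (intro exI conjI ballI impI)
      show "d > 0" unfolding d_def using df(1) dH(1) by simp
      fix v :: "real \<Rightarrow> real" and s :: real assume v: "v \<in> closed_ball_C01 \<rho>" and cl: "\<forall>s\<in>{0..1}. \<bar>v s - u s\<bar> \<le> d" and s: "s \<in> {0..1}"
      have "supnorm (\<lambda>t. v t - u t) \<le> d" by (rule supnorm_le) (use cl in auto)
      also have "\<dots> < dH" unfolding d_def using dH(1) by simp
      finally have Hcl: "\<bar>H v - H u\<bar> < df / 2" using dH(2) v by blast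
      have vs: "\<bar>v s - u s\<bar> \<le> df / 4" using cl s unfolding d_def by force
      have "dist (s, v s, H v) (s, u s, H u) = sqrt ((v s - u s)^2 + (H v - H u)^2)"
        by (simp add: dist_Pair_Pair dist_real_def)
      also have "\<dots> \<le> \<bar>v s - u s\<bar> + \<bar>H v - H u\<bar>" by (rule sqrt_sum_squares_le_sum_abs)
      also have "\<dots> < df" using vs Hcl abs_ge_zero[of "H v - H u"] by linarith
      finally have "dist (s, v s, H v) (s, u s, H u) < df" .
      then have "dist ((\<lambda>(t, u, v). f t u v) (s, v s, H v)) ((\<lambda>(t, u, v). f t u v) (s, u s, H u)) < e"
        using df(2) inPi[OF u s] inPi[OF v s] by blast
      then show "\<bar>g v s - g u s\<bar> \<le> e" unfolding g_def by (simp add: dist_real_def)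
    qed
  qed
  interpret ks: ksetup \<rho> k g Mf
    by unfold_locales (fact rho_pos, fact k_cont, fact gc, fact gb, fact guc)
  have Tf_eq: "ks.Tf u t = integral {0..1} (\<lambda>s. k t s * f s (u s) (H u))" for u t
    unfolding ks.Tf_def by (simp add: g_def)
  have khc: "continuous_on {0..1} (\<lambda>s. k t s * h s)" if "t \<in> {0..1}" "continuous_on {0..1} h" for t h
    by (intro continuous_intros k_cont_t[OF k_cont] that)
  have Tf_hi: "ks.Tf u t \<le> Fhi t" if u: "u \<in> closed_ball_C01 \<rho>" and t: "t \<in> {0..1}" for u t
    unfolding ks.Tf_def Fhi_def
  proof (rule integral_le)
    show "(\<lambda>s. k t s * g u s) integrable_on {0..1}"
      by (rule integrable_continuous_interval[OF ks.integrand_cont[OF u t]])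
    show "(\<lambda>s. k t s * fhi s) integrable_on {0..1}"
      by (rule integrable_continuous_interval[OF khc[OF t fhi_cont]])
    fix s :: real assume s: "s \<in> {0..1}"
    have "g u s \<le> fhi s" using f_bounds inPi[OF u s] unfolding g_def Pi_def by auto
    then show "k t s * g u s \<le> k t s * fhi s" using k_nonneg[OF t s] by (rule mult_left_mono)
  qed
  have Tf_lo: "Flo t \<le> ks.Tf u t" if u: "u \<in> closed_ball_C01 \<rho>" and t: "t \<in> {0..1}" for u t
    unfolding ks.Tf_def Flo_def
  proof (rule integral_le)
    show "(\<lambda>s. k t s * g u s) integrable_on {0..1}"
      by (rule integrable_continuous_interval[OF ks.integrand_cont[OF u t]])
    show "(\<lambda>s. k t s * flo s) integrable_on {0..1}"
      by (rule integrable_continuous_interval[OF khc[OF t flo_cont]])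
    fix s :: real assume s: "s \<in> {0..1}"
    have "flo s \<le> g u s" using f_bounds inPi[OF u s] unfolding g_def Pi_def by auto
    then show "k t s * flo s \<le> k t s * g u s" using k_nonneg[OF t s] by (rule mult_left_mono)
  qed
  have ND: "\<exists>tr \<eta> \<delta>. tr \<in> {0..1} \<and> \<eta> > 0 \<and> \<delta> > 0 \<and>
      (\<forall>t u. t \<in> {0..1} \<longrightarrow> \<bar>t - tr\<bar> < \<delta> \<longrightarrow> u \<in> closed_ball_C01 \<rho> \<longrightarrow> \<eta> \<le> \<bar>ks.Tf u t\<bar>)"
    using cond5
  proof
    assume "\<exists>t\<in>{0..1}. Fhi t < 0"
    then obtain tr where tr: "tr \<in> {0..1}" "Fhi tr < 0" by blast
    obtain Mh where Mh: "Mh \<ge> 0" "\<And>s. s \<in> {0..1} \<Longrightarrow> norm (fhi s) \<le> Mh"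
      using continuous_on_compact_bound[OF compact_Icc fhi_cont] by blast
    define e' where "e' = - Fhi tr / (2 * (Mh + 1))"
    have e': "e' > 0" unfolding e'_def by (rule divide_pos_pos) (use tr(2) Mh(1) in auto)
    obtain \<delta> where \<delta>: "\<delta> > 0" "\<forall>t\<in>{0..1}. \<forall>t'\<in>{0..1}. \<forall>s\<in>{0..1}. \<bar>t - t'\<bar> < \<delta> \<longrightarrow> \<bar>k t s - k t' s\<bar> < e'"
      using k_unif[OF k_cont e'] by blast
    show ?thesis
    proof (rule exI[of _ tr], rule exI[of _ "- Fhi tr / 2"], rule exI[of _ \<delta>], intro conjI allI impI)
      show "tr \<in> {0..1}" "\<delta> > 0" by (fact tr(1), fact \<delta>(1))
      show "- Fhi tr / 2 > 0" using tr(2) by simp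
      fix t u assume t: "t \<in> {0..1}" and td: "\<bar>t - tr\<bar> < \<delta>" and u: "u \<in> closed_ball_C01 \<rho>"
      have "\<bar>Fhi t - Fhi tr\<bar> \<le> e' * Mh" unfolding Fhi_def
        by (rule kint_diff[OF k_cont fhi_cont _ t tr(1)]) (use Mh(2) \<delta>(2) t tr(1) td in \<open>auto intro: less_imp_le\<close>)
      also have "\<dots> \<le> e' * (Mh + 1)" using e' by simp
      also have "\<dots> = - Fhi tr / 2"
      proof -
        have "Mh + 1 \<noteq> 0" "2 * Mh + 2 \<noteq> 0" "2 * (Mh + 1) \<noteq> 0" using Mh(1) by auto
        then show ?thesis unfolding e'_def by (simp add: field_simps)
      qed
      finally have "Fhi t \<le> Fhi tr / 2" by linarith
      then have "ks.Tf u t \<le> Fhi tr / 2" using Tf_hi[OF u t] by linarith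
      then show "- Fhi tr / 2 \<le> \<bar>ks.Tf u t\<bar>" using tr(2) by linarith
    qed
  next
    assume "\<exists>t\<in>{0..1}. Flo t > 0"
    then obtain tr where tr: "tr \<in> {0..1}" "Flo tr > 0" by blast
    obtain Mh where Mh: "Mh \<ge> 0" "\<And>s. s \<in> {0..1} \<Longrightarrow> norm (flo s) \<le> Mh"
      using continuous_on_compact_bound[OF compact_Icc flo_cont] by blast
    define e' where "e' = Flo tr / (2 * (Mh + 1))"
    have e': "e' > 0" unfolding e'_def by (rule divide_pos_pos) (use tr(2) Mh(1) in auto)
    obtain \<delta> where \<delta>: "\<delta> > 0" "\<forall>t\<in>{0..1}. \<forall>t'\<in>{0..1}. \<forall>s\<in>{0..1}. \<bar>t - t'\<bar> < \<delta> \<longrightarrow> \<bar>k t s - k t' s\<bar> < e'"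
      using k_unif[OF k_cont e'] by blast
    show ?thesis
    proof (rule exI[of _ tr], rule exI[of _ "Flo tr / 2"], rule exI[of _ \<delta>], intro conjI allI impI)
      show "tr \<in> {0..1}" "\<delta> > 0" by (fact tr(1), fact \<delta>(1))
      show "Flo tr / 2 > 0" using tr(2) by simp
      fix t u assume t: "t \<in> {0..1}" and td: "\<bar>t - tr\<bar> < \<delta>" and u: "u \<in> closed_ball_C01 \<rho>"
      have "\<bar>Flo t - Flo tr\<bar> \<le> e' * Mh" unfolding Flo_def
        by (rule kint_diff[OF k_cont flo_cont _ t tr(1)]) (use Mh(2) \<delta>(2) t tr(1) td in \<open>auto intro: less_imp_le\<close>)
      also have "\<dots> \<le> e' * (Mh + 1)" using e' by simp
      also have "\<dots> = Flo tr / 2"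
      proof -
        have "Mh + 1 \<noteq> 0" "2 * Mh + 2 \<noteq> 0" "2 * (Mh + 1) \<noteq> 0" using Mh(1) by auto
        then show ?thesis unfolding e'_def by (simp add: field_simps)
      qed
      finally have "Flo tr / 2 \<le> Flo t" by linarith
      then have "Flo tr / 2 \<le> ks.Tf u t" using Tf_lo[OF u t] by linarith
      then show "Flo tr / 2 \<le> \<bar>ks.Tf u t\<bar>" by linarith
    qed
  qed
  then obtain tr \<eta> \<delta> where tr: "tr \<in> {0..1}" "\<eta> > 0" "\<delta> > 0"
    "\<And>t u. t \<in> {0..1} \<Longrightarrow> \<bar>t - tr\<bar> < \<delta> \<Longrightarrow> u \<in> closed_ball_C01 \<rho> \<Longrightarrow> \<eta> \<le> \<bar>ks.Tf u t\<bar>"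
    by blast
  obtain lp up where p: "1 * lp > 0" "up \<in> sphere_C01 \<rho>" "\<forall>t\<in>{0..1}. up t = lp * ks.Tf up t"
    using ks.core[OF tr(1,2,3,4), of 1] by auto
  obtain lm um where m: "(-1) * lm > 0" "um \<in> sphere_C01 \<rho>" "\<forall>t\<in>{0..1}. um t = lm * ks.Tf um t"
    using ks.core[OF tr(1,2,3,4), of "-1"] by auto
  have part1: "\<exists>lp lm up um. lp > 0 \<and> lm < 0 \<and> up \<in> sphere_C01 \<rho> \<and> um \<in> sphere_C01 \<rho> \<and>
            (\<forall>t\<in>{0..1}. up t = lp * integral {0..1} (\<lambda>s. k t s * f s (up s) (H up))) \<and>
            (\<forall>t\<in>{0..1}. um t = lm * integral {0..1} (\<lambda>s. k t s * f s (um s) (H um)))"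
    using p m unfolding Tf_eq by (intro exI[of _ lp] exI[of _ lm] exI[of _ up] exI[of _ um]) auto
  have part2: "(\<forall>tr\<in>{0..1}. Fhi tr < 0 \<longrightarrow> \<bar>lam\<bar> \<le> - \<rho> / Fhi tr) \<and>
            (\<forall>tr\<in>{0..1}. Flo tr > 0 \<longrightarrow> \<bar>lam\<bar> \<le> \<rho> / Flo tr)"
    if u: "u \<in> closed_ball_C01 \<rho>" and equ: "\<forall>t\<in>{0..1}. u t = lam * integral {0..1} (\<lambda>s. k t s * f s (u s) (H u))"
    for lam u
  proof (intro conjI ballI impI)
    fix tr assume tr: "tr \<in> {0..1}" and F: "Fhi tr < 0"
    have "ks.Tf u tr \<le> Fhi tr" by (rule Tf_hi[OF u tr])
    then have "- Fhi tr \<le> \<bar>ks.Tf u tr\<bar>" using F by linarith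
    then have "\<bar>lam\<bar> * (- Fhi tr) \<le> \<bar>lam\<bar> * \<bar>ks.Tf u tr\<bar>" by (rule mult_left_mono) simp
    also have "\<dots> = \<bar>u tr\<bar>" using equ tr unfolding Tf_eq by (simp add: abs_mult)
    also have "\<dots> \<le> \<rho>" by (rule ball_C01_D(1)[OF u tr])
    finally have "\<bar>lam\<bar> * (- Fhi tr) \<le> \<rho>" .
    moreover have pos: "- Fhi tr > 0" using F by simp
    ultimately have "\<bar>lam\<bar> \<le> \<rho> / (- Fhi tr)" by (simp only: pos_le_divide_eq)
    also have "\<rho> / (- Fhi tr) = - \<rho> / Fhi tr" by simp
    finally show "\<bar>lam\<bar> \<le> - \<rho> / Fhi tr" .
  next
    fix tr assume tr: "tr \<in> {0..1}" and F: "Flo tr > 0"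
    have "Flo tr \<le> ks.Tf u tr" by (rule Tf_lo[OF u tr])
    then have "Flo tr \<le> \<bar>ks.Tf u tr\<bar>" by linarith
    then have "\<bar>lam\<bar> * Flo tr \<le> \<bar>lam\<bar> * \<bar>ks.Tf u tr\<bar>" by (rule mult_left_mono) simp
    also have "\<dots> = \<bar>u tr\<bar>" using equ tr unfolding Tf_eq by (simp add: abs_mult)
    also have "\<dots> \<le> \<rho>" by (rule ball_C01_D(1)[OF u tr])
    finally have "\<bar>lam\<bar> * Flo tr \<le> \<rho>" .
    then show "\<bar>lam\<bar> \<le> \<rho> / Flo tr" using F by (simp only: pos_le_divide_eq)
  qed
  show ?thesis using part1 part2 by blast
qed

end
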